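(* Let $R>r>0$ with $1<R/r<\sqrt{2}$. Then the standard torus $T_{R,r}$ is conformally equivalent to the standard torus $T_{R,\sqrt{R^2-r^2}}$. Moreover, the map $T_{R,r}\mapsto T_{R,\sqrt{R^2-r^2}}$ is a bijection between the set of standard tori $T_{R,r}$ with $1<R/r<\sqrt{2}$ and the set of standard tori $T_{R,r}$ with $\sqrt{2}<R/r$.
   Context: For $R>r>0$, the standard torus $T_{R,r}\subset\mathbb{R}^3$ is the image of $\Phi(\theta,\varphi)=\big((R+r\cos\varphi)\cos\theta,(R+r\cos\varphi)\sin\theta,r\sin\varphi\big)$, $(\theta,\varphi)\in\mathbb{R}^2$, equipped with the complex structure (conformal class) induced by the Euclidean metric of $\mathbb{R}^3$. Standard tori are indexed by the pairs $(R,r)$ with $R>r>0$. *)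

theory Defs
  imports "HOL-Analysis.Analysis"
begin

definition torus_param :: "real \<Rightarrow> real \<Rightarrow> real \<times> real \<Rightarrow> real \<times> real \<times> real" where
  "torus_param R r p = (let \<theta> = fst p; \<phi> = snd p in
     ((R + r * cos \<phi>) * cos \<theta>, (R + r * cos \<phi>) * sin \<theta>, r * sin \<phi>))"

definition torus :: "real \<Rightarrow> real \<Rightarrow> (real \<times> real \<times> real) set" where
  "torus R r = range (torus_param R r)"

definition standard_torus_index :: "real \<Rightarrow> real \<Rightarrow> bool" where
  "standard_torus_index R r \<longleftrightarrow> 0 < r \<and> r < R"

definition torus_metric :: "real \<Rightarrow> real \<Rightarrow> real \<times> real \<Rightarrow> real \<times> real \<Rightarrow> real \<times> real \<Rightarrow> real" where
  "torus_metric R r p v w =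
     frechet_derivative (torus_param R r) (at p) v \<bullet> frechet_derivative (torus_param R r) (at p) w"

text \<open>Conformal equivalence (biholomorphic equivalence of the induced complex
  structures): a homeomorphism F between the tori whose lift g to the parameter
  plane is differentiable, with differential that is orientation preserving and
  conformal with respect to the induced metrics.\<close>
definition conformally_equivalent :: "real \<Rightarrow> real \<Rightarrow> real \<Rightarrow> real \<Rightarrow> bool" where
  "conformally_equivalent R r R' r' \<longleftrightarrow>
     (\<exists>F F' g Dg.
        homeomorphism (torus R r) (torus R' r') F F' \<and>
        (\<forall>x. torus_param R' r' (g x) = F (torus_param R r x)) \<and>
        (\<forall>x. (g has_derivative Dg x) (at x)) \<and>
        (\<forall>x. fst (Dg x (1,0)) * snd (Dg x (0,1)) - snd (Dg x (1,0)) * fst (Dg x (0,1)) > 0) \<and>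
        (\<forall>x. \<exists>c>0. \<forall>v w. torus_metric R' r' (g x) (Dg x v) (Dg x w) = c * torus_metric R r x v w))"

end

theory Submission
  imports Defs
begin

definition hh :: "real \<Rightarrow> real \<Rightarrow> real" where
  "hh \<sigma> t = t - 2 * arctan (\<sigma> * sin t / (1 + \<sigma> * cos t))"

lemma den_pos: "\<bar>\<sigma>\<bar> < 1 \<Longrightarrow> 0 < 1 + \<sigma> * cos (t::real)"
proof -
  assume a: "\<bar>\<sigma>\<bar> < 1"
  have "\<bar>\<sigma> * cos t\<bar> \<le> \<bar>\<sigma>\<bar>" using abs_cos_le_one[of t]
    by (simp add: abs_mult mult_left_le)
  then show ?thesis using a by linarith
qed

lemma Q_eq: "(1 + (\<sigma>::real) * cos t)\<^sup>2 + (\<sigma> * sin t)\<^sup>2 = 1 + 2*\<sigma>*cos t + \<sigma>\<^sup>2"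
  using sin_cos_squared_add[of t] by algebra

lemma Q_pos: "\<bar>\<sigma>::real\<bar> < 1 \<Longrightarrow> 0 < 1 + 2*\<sigma>*cos t + \<sigma>\<^sup>2"
  using den_pos[of \<sigma> t] Q_eq[of \<sigma> t]
  by (metis add_pos_nonneg zero_le_power2 zero_less_power2 less_irrefl)

lemma inv_frac: "(D::real) \<noteq> 0 \<Longrightarrow> inverse (Q/D\<^sup>2) * (N/D\<^sup>2) = N/Q"
  by (cases "Q = 0") (simp_all add: field_simps)

lemma hh_deriv:
  assumes "\<bar>\<sigma>\<bar> < 1"
  shows "(hh \<sigma> has_real_derivative (1-\<sigma>\<^sup>2)/(1 + 2*\<sigma>*cos t + \<sigma>\<^sup>2)) (at t)"
proof -
  define D where "D = 1 + \<sigma> * cos t"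
  define S where "S = \<sigma> * sin t"
  have D: "0 < D" using den_pos[OF assms] D_def by simp
  have QE: "D\<^sup>2 + S\<^sup>2 = 1 + 2*\<sigma>*cos t + \<sigma>\<^sup>2" using Q_eq D_def S_def by simp
  have d1: "((\<lambda>t. \<sigma> * sin t / (1 + \<sigma> * cos t)) has_real_derivative
      ((\<sigma> * cos t) * (1 + \<sigma> * cos t) - ((0 + \<sigma> * - sin t) * (\<sigma> * sin t))) / (1 + \<sigma> * cos t) ^ Suc (Suc 0)) (at t)"
    by (rule DERIV_quotient[OF DERIV_cmult[OF DERIV_sin] DERIV_add[OF DERIV_const DERIV_cmult[OF DERIV_cos]]])
       (use D D_def in simp)
  have e1: "((\<sigma> * cos t) * (1 + \<sigma> * cos t) - ((0 + \<sigma> * - sin t) * (\<sigma> * sin t))) / (1 + \<sigma> * cos t) ^ Suc (Suc 0)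
      = (\<sigma> * cos t + \<sigma>\<^sup>2) / D\<^sup>2"
    unfolding D_def using sin_cos_squared_add[of t]
    by (intro arg_cong2[where f="(/)"]) (simp_all add: power2_eq_square, algebra)
  have d2: "(hh \<sigma> has_real_derivative 1 - 2 * (inverse (1 + (S/D)\<^sup>2) * ((\<sigma> * cos t + \<sigma>\<^sup>2) / D\<^sup>2))) (at t)"
    unfolding hh_def[abs_def] S_def D_def
    by (rule DERIV_diff[OF DERIV_ident DERIV_cmult[OF DERIV_chain2[OF DERIV_arctan d1[unfolded e1 D_def]]]])
  have x1: "1 + (S/D)\<^sup>2 = (D\<^sup>2 + S\<^sup>2)/D\<^sup>2" using D by (simp add: power_divide add_divide_distrib)
  have Q: "0 < 1 + 2*\<sigma>*cos t + \<sigma>\<^sup>2" using Q_pos[OF assms] .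
  have "1 - 2 * (inverse (1 + (S/D)\<^sup>2) * ((\<sigma> * cos t + \<sigma>\<^sup>2) / D\<^sup>2))
      = 1 - 2 * (\<sigma> * cos t + \<sigma>\<^sup>2) / (1 + 2*\<sigma>*cos t + \<sigma>\<^sup>2)"
    unfolding x1 QE using inv_frac[of D "1 + 2*\<sigma>*cos t + \<sigma>\<^sup>2" "\<sigma> * cos t + \<sigma>\<^sup>2"] D by simp
  also have "\<dots> = (1-\<sigma>\<^sup>2)/(1 + 2*\<sigma>*cos t + \<sigma>\<^sup>2)"
    using Q by (simp add: field_simps)
  finally show ?thesis using d2 by simp
qed

lemma cos2_arctan: "cos (2 * arctan x) = (1 - x\<^sup>2) / (1 + x\<^sup>2)"
proof -
  have p: "0 < 1 + x\<^sup>2" by (simp add: add_pos_nonneg)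
  have "(cos (arctan x))\<^sup>2 = 1 / (1 + x\<^sup>2)" using p
    by (simp add: cos_arctan power_divide)
  moreover have "(sin (arctan x))\<^sup>2 = x\<^sup>2 / (1 + x\<^sup>2)" using p
    by (simp add: sin_arctan power_divide)
  ultimately show ?thesis by (simp add: cos_double diff_divide_distrib)
qed

lemma sin2_arctan: "sin (2 * arctan x) = 2 * x / (1 + x\<^sup>2)"
proof -
  have p: "0 < 1 + x\<^sup>2" by (simp add: add_pos_nonneg)
  have "sin (arctan x) * cos (arctan x) = x / (1 + x\<^sup>2)"
    using p by (simp add: sin_arctan cos_arctan)
  then show ?thesis by (simp add: sin_double)
qed

lemma frac_c2: assumes "(D::real) \<noteq> 0" shows "(1 - (S/D)\<^sup>2)/(1 + (S/D)\<^sup>2) = (D\<^sup>2 - S\<^sup>2)/(D\<^sup>2 + S\<^sup>2)"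
proof -
  have d: "D\<^sup>2 \<noteq> 0" using assms by simp
  have "1 - (S/D)\<^sup>2 = (D\<^sup>2 - S\<^sup>2)/D\<^sup>2" using d by (simp add: power_divide diff_divide_distrib)
  moreover have "1 + (S/D)\<^sup>2 = (D\<^sup>2 + S\<^sup>2)/D\<^sup>2" using d by (simp add: power_divide add_divide_distrib)
  ultimately show ?thesis using d by simp
qed

lemma frac_s2: assumes "(D::real) \<noteq> 0" shows "2 * (S/D)/(1 + (S/D)\<^sup>2) = (2*S*D)/(D\<^sup>2 + S\<^sup>2)"
proof -
  have d: "D\<^sup>2 \<noteq> 0" using assms by simp
  have "1 + (S/D)\<^sup>2 = (D\<^sup>2 + S\<^sup>2)/D\<^sup>2" using d by (simp add: power_divide add_divide_distrib)
  moreover have "2 * (S/D) = (2*S*D)/D\<^sup>2" using assms by (simp add: power2_eq_square)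
  ultimately show ?thesis using d by simp
qed

lemma cos_hh:
  assumes "\<bar>\<sigma>\<bar> < 1"
  shows "cos (hh \<sigma> t) = ((1+\<sigma>\<^sup>2) * cos t + 2*\<sigma>) / (1 + 2*\<sigma>*cos t + \<sigma>\<^sup>2)"
proof -
  define D where "D = 1 + \<sigma> * cos t"
  define S where "S = \<sigma> * sin t"
  have D: "0 < D" using den_pos[OF assms] D_def by simp
  have QE: "D\<^sup>2 + S\<^sup>2 = 1 + 2*\<sigma>*cos t + \<sigma>\<^sup>2" using Q_eq D_def S_def by simp
  have "cos (hh \<sigma> t) = cos t * cos (2 * arctan (S/D)) + sin t * sin (2 * arctan (S/D))"
    unfolding hh_def S_def D_def by (simp add: cos_diff)
  also have "\<dots> = cos t * ((D\<^sup>2 - S\<^sup>2)/(D\<^sup>2 + S\<^sup>2)) + sin t * ((2*S*D)/(D\<^sup>2 + S\<^sup>2))"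
    unfolding cos2_arctan sin2_arctan frac_c2[OF D[THEN less_imp_neq, symmetric]]
       frac_s2[OF D[THEN less_imp_neq, symmetric]] ..
  also have "\<dots> = (cos t * (D\<^sup>2 - S\<^sup>2) + sin t * (2*S*D)) / (1 + 2*\<sigma>*cos t + \<sigma>\<^sup>2)"
    unfolding QE by (simp add: add_divide_distrib)
  also have "\<dots> = ((1+\<sigma>\<^sup>2) * cos t + 2*\<sigma>) / (1 + 2*\<sigma>*cos t + \<sigma>\<^sup>2)"
    unfolding D_def S_def using sin_cos_squared_add[of t]
    by (intro arg_cong[where f="\<lambda>u. u / _"]) algebra
  finally show ?thesis .
qed

lemma hh_cs:
  assumes "cos u = cos v" "sin u = sin v"
  shows "cos (hh \<sigma> u) = cos (hh \<sigma> v) \<and> sin (hh \<sigma> u) = sin (hh \<sigma> v)"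
  unfolding hh_def using assms by (simp add: cos_diff sin_diff)

lemma hh_0: "hh \<sigma> 0 = 0" by (simp add: hh_def)

lemma inv_alg:
  fixes \<sigma> c :: real
  assumes Q: "0 < 1 + 2*\<sigma>*c + \<sigma>\<^sup>2" and s1: "0 < 1 - \<sigma>\<^sup>2"
  shows "(1-(-\<sigma>)\<^sup>2)/(1 + 2*(-\<sigma>)*(((1+\<sigma>\<^sup>2) * c + 2*\<sigma>) / (1 + 2*\<sigma>*c + \<sigma>\<^sup>2)) + (-\<sigma>)\<^sup>2) * ((1-\<sigma>\<^sup>2)/(1 + 2*\<sigma>*c + \<sigma>\<^sup>2)) = 1"
proof -
  define Q where "Q = 1 + 2*\<sigma>*c + \<sigma>\<^sup>2"
  define N where "N = (1+\<sigma>\<^sup>2) * c + 2*\<sigma>"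
  define a where "a = 1 - \<sigma>\<^sup>2"
  have q: "Q \<noteq> 0" using Q Q_def by simp
  have a: "a \<noteq> 0" using s1 a_def by simp
  have e1: "1 + 2*(-\<sigma>)*(N/Q) + (-\<sigma>)\<^sup>2 = (Q*(1+\<sigma>\<^sup>2) - 2*\<sigma>*N)/Q"
    using q by (simp add: field_simps)
  have e2: "Q*(1+\<sigma>\<^sup>2) - 2*\<sigma>*N = a\<^sup>2" unfolding Q_def N_def a_def
    by (simp add: power2_eq_square algebra_simps)
  have e3: "1-(-\<sigma>)\<^sup>2 = a" unfolding a_def by simp
  have "a/(a\<^sup>2/Q) * (a/Q) = 1" using a q by (simp add: field_simps power2_eq_square)
  then show ?thesis unfolding Q_def[symmetric] N_def[symmetric] a_def[symmetric] e1 e2 e3 .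
qed

lemma hh_inv:
  assumes "\<bar>\<sigma>\<bar> < 1"
  shows "hh (-\<sigma>) (hh \<sigma> t) = t"
proof -
  have a2: "\<bar>-\<sigma>\<bar> < 1" using assms by simp
  have s1: "0 < 1 - \<sigma>\<^sup>2" using assms by (simp add: abs_square_less_1)
  have d: "((\<lambda>u. hh (-\<sigma>) (hh \<sigma> u) - u) has_real_derivative 0) (at u)" for u
  proof -
    have h1: "((\<lambda>u. hh (-\<sigma>) (hh \<sigma> u) - u) has_real_derivative
       (1-(-\<sigma>)\<^sup>2)/(1 + 2*(-\<sigma>)*cos (hh \<sigma> u) + (-\<sigma>)\<^sup>2) * ((1-\<sigma>\<^sup>2)/(1 + 2*\<sigma>*cos u + \<sigma>\<^sup>2)) - 1) (at u)"
      by (rule DERIV_diff[OF DERIV_chain2[OF hh_deriv[OF a2] hh_deriv[OF assms]] DERIV_ident])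
    moreover have h2: "(1-(-\<sigma>)\<^sup>2)/(1 + 2*(-\<sigma>)*cos (hh \<sigma> u) + (-\<sigma>)\<^sup>2) * ((1-\<sigma>\<^sup>2)/(1 + 2*\<sigma>*cos u + \<sigma>\<^sup>2)) = 1"
      unfolding cos_hh[OF assms] by (rule inv_alg[OF Q_pos[OF assms] s1])
    show ?thesis using h1 unfolding h2 by simp
  qed
  have "hh (-\<sigma>) (hh \<sigma> t) - t = hh (-\<sigma>) (hh \<sigma> 0) - 0"
    using DERIV_isconst_all[of "\<lambda>t. hh (-\<sigma>) (hh \<sigma> t) - t"] d by blast
  then show ?thesis by (simp add: hh_0)
qed

definition tpD :: "real \<Rightarrow> real \<Rightarrow> real \<times> real \<Rightarrow> real \<times> real \<Rightarrow> real \<times> real \<times> real" where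
  "tpD R r x v = (- (r * sin (snd x) * snd v) * cos (fst x) - (R + r * cos (snd x)) * sin (fst x) * fst v,
                  - (r * sin (snd x) * snd v) * sin (fst x) + (R + r * cos (snd x)) * cos (fst x) * fst v,
                  r * cos (snd x) * snd v)"

lemma tp_deriv: "(torus_param R r has_derivative tpD R r x) (at x)"
proof -
  have e: "torus_param R r = (\<lambda>x. ((R + r * cos (snd x)) * cos (fst x), (R + r * cos (snd x)) * sin (fst x), r * sin (snd x)))"
    by (auto simp: torus_param_def fun_eq_iff Let_def)
  show ?thesis unfolding e tpD_def
    by (rule derivative_eq_intros refl | simp)+ (auto simp: fun_eq_iff algebra_simps)
qed

lemma tmetric: "torus_metric R r x v w = (R + r * cos (snd x))\<^sup>2 * fst v * fst w + r\<^sup>2 * snd v * snd w"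
proof -
  have "frechet_derivative (torus_param R r) (at x) = tpD R r x"
    using frechet_derivative_at[OF tp_deriv] by simp
  note fd = this
  show ?thesis unfolding torus_metric_def fd tpD_def inner_prod_def inner_real_def fst_conv snd_conv
    using sin_cos_squared_add[of "fst x"] sin_cos_squared_add[of "snd x"] by algebra
qed

lemma cont_via_quot:
  fixes p :: "'a::metric_space \<Rightarrow> 'b::metric_space" and F :: "'b \<Rightarrow> 'c::metric_space"
  assumes "compact S" "continuous_on S p" "p ` S = T" "continuous_on S (F \<circ> p)"
  shows "continuous_on T F"
proof -
  have q: "quotient_map (top_of_set S) (top_of_set T) p"
    by (rule T1_Spaces.continuous_imp_quotient_map)
       (use assms in \<open>auto simp: compact_space_subtopology Hausdorff_space_subtopology\<close>)
  have "continuous_map (top_of_set T) euclidean F"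
    by (rule continuous_compose_quotient_map[OF q]) (use assms in simp)
  then show ?thesis by simp
qed

lemma tp_eqI:
  assumes "cos (fst x) = cos (fst y)" "sin (fst x) = sin (fst y)" "cos (snd x) = cos (snd y)" "sin (snd x) = sin (snd y)"
  shows "torus_param R r x = torus_param R r y"
  using assms by (simp add: torus_param_def Let_def)

lemma tp_eqD:
  assumes "0 < r" "r < R" "torus_param R r x = torus_param R r y"
  shows "cos (fst x) = cos (fst y) \<and> sin (fst x) = sin (fst y) \<and> cos (snd x) = cos (snd y) \<and> sin (snd x) = sin (snd y)"
proof -
  define A where "A = R + r * cos (snd x)"
  define B where "B = R + r * cos (snd y)"
  have cpos: "0 < R + r * cos t" for t
  proof -
    have "- r \<le> r * cos t" using assms(1) cos_ge_minus_one[of t]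
      by (metis mult.right_neutral mult_le_cancel_left_pos mult_minus_right)
    then show ?thesis using assms by linarith
  qed
  have A: "A > 0" "B > 0" using cpos A_def B_def by auto
  have e: "A * cos (fst x) = B * cos (fst y)" "A * sin (fst x) = B * sin (fst y)" "r * sin (snd x) = r * sin (snd y)"
    using assms(3) by (simp_all add: torus_param_def Let_def A_def B_def)
  have "A\<^sup>2 = (A * cos (fst x))\<^sup>2 + (A * sin (fst x))\<^sup>2"
    using sin_cos_squared_add[of "fst x"] by algebra
  also have "\<dots> = B\<^sup>2" using e sin_cos_squared_add[of "fst y"] by algebra
  finally have "A = B" using A by (simp add: power2_eq_iff)
  then have "cos (snd x) = cos (snd y)" using A_def B_def assms by simp
  moreover have "cos (fst x) = cos (fst y)" "sin (fst x) = sin (fst y)"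
    using e(1,2) \<open>A = B\<close> A by auto
  moreover have "sin (snd x) = sin (snd y)" using e(3) assms by simp
  ultimately show ?thesis by blast
qed

lemma torus_box: "torus R r = torus_param R r ` cbox (0,0) (2*pi,2*pi)"
proof
  show "torus_param R r ` cbox (0,0) (2*pi,2*pi) \<subseteq> torus R r" by (auto simp: torus_def)
  show "torus R r \<subseteq> torus_param R r ` cbox (0,0) (2*pi,2*pi)"
  proof
    fix q assume "q \<in> torus R r"
    then obtain x where q: "q = torus_param R r x" by (auto simp: torus_def)
    obtain a where a: "0 \<le> a" "a < 2*pi" "cos (fst x) = cos a" "sin (fst x) = sin a"
      using sincos_total_2pi[of "cos (fst x)" "sin (fst x)"] by auto
    obtain b where b: "0 \<le> b" "b < 2*pi" "cos (snd x) = cos b" "sin (snd x) = sin b"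
      using sincos_total_2pi[of "cos (snd x)" "sin (snd x)"] by auto
    have "q = torus_param R r (a,b)" unfolding q by (rule tp_eqI) (use a b in auto)
    moreover have "(a,b) \<in> cbox (0,0) (2*pi,2*pi)" using a b by (auto simp: cbox_Pair_iff)
    ultimately show "q \<in> torus_param R r ` cbox (0,0) (2*pi,2*pi)" by blast
  qed
qed

lemma tp_cont: "continuous_on S (torus_param R r)"
  using tp_deriv
  by (meson continuous_at_imp_continuous_on has_derivative_continuous)

definition hdv :: "real \<Rightarrow> real \<Rightarrow> real" where
  "hdv \<sigma> t = (1-\<sigma>\<^sup>2)/(1 + 2*\<sigma>*cos t + \<sigma>\<^sup>2)"

lemma hd_pos: "\<bar>\<sigma>\<bar> < 1 \<Longrightarrow> 0 < hdv \<sigma> (t::real)"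
  unfolding hdv_def using Q_pos[of \<sigma>] by (simp add: abs_square_less_1)

lemma cpos: "0 < r \<Longrightarrow> r < R \<Longrightarrow> 0 < R + r * cos (t::real)"
proof -
  assume a: "0 < r" "r < R"
  have "- r \<le> r * cos t" using a(1) cos_ge_minus_one[of t]
    by (metis mult.right_neutral mult_le_cancel_left_pos mult_minus_right)
  then show ?thesis using a by linarith
qed

lemma ratio_cancel: "(k::real) \<noteq> 0 \<Longrightarrow> m \<noteq> 0 \<Longrightarrow> (k*b/m)/(k*d/m) = b/d"
  by (cases "d = 0") (simp_all add: field_simps)

lemma sig_facts:
  fixes A B C x :: real
  assumes "A\<^sup>2 = B\<^sup>2 + C\<^sup>2" "0 < C" "B < A" "0 < A + C * x"
  defines "\<sigma> \<equiv> (A - B) / C"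
  shows "(1-\<sigma>\<^sup>2)/(1 + 2*\<sigma>*x + \<sigma>\<^sup>2) = B / (A + C * x)"
    and "((1+\<sigma>\<^sup>2)*x + 2*\<sigma>)/(1 + 2*\<sigma>*x + \<sigma>\<^sup>2) = (A * x + C) / (A + C * x)"
proof -
  have c: "C \<noteq> 0" "C\<^sup>2 \<noteq> 0" using assms by auto
  have ab: "A - B \<noteq> 0" using assms by simp
  have e1: "1 - \<sigma>\<^sup>2 = (2*(A-B))*B/C\<^sup>2"
  proof -
    have "C\<^sup>2 * (1 - \<sigma>\<^sup>2) = C\<^sup>2 - (A - B)\<^sup>2" unfolding \<sigma>_def using c
      by (simp add: power_divide right_diff_distrib)
    also have "\<dots> = 2*B*(A-B)" using assms(1) by (simp add: power2_eq_square algebra_simps)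
    finally show ?thesis using c by (simp add: field_simps)
  qed
  have e2: "1 + 2*\<sigma>*x + \<sigma>\<^sup>2 = (2*(A-B))*(A+C*x)/C\<^sup>2"
  proof -
    have "C\<^sup>2 * (1 + 2*\<sigma>*x + \<sigma>\<^sup>2) = C\<^sup>2 + 2*(A-B)*C*x + (A - B)\<^sup>2" unfolding \<sigma>_def using c
      by (simp add: power_divide distrib_left power2_eq_square)
    also have "\<dots> = 2*(A-B)*(A+C*x)" using assms(1) by (simp add: power2_eq_square algebra_simps)
    finally show ?thesis using c by (simp add: field_simps)
  qed
  have e3: "(1+\<sigma>\<^sup>2)*x + 2*\<sigma> = (2*(A-B))*(A*x+C)/C\<^sup>2"
  proof -
    have "C\<^sup>2 * ((1+\<sigma>\<^sup>2)*x + 2*\<sigma>) = (C\<^sup>2 + (A - B)\<^sup>2)*x + 2*(A-B)*C" unfolding \<sigma>_def using c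
      by (simp add: power_divide distrib_left distrib_right power2_eq_square)
    also have "\<dots> = 2*(A-B)*(A*x+C)" using assms(1) by algebra
    finally show ?thesis using c by (simp add: field_simps)
  qed
  have p: "A + C * x \<noteq> 0" using assms by simp
  show "(1-\<sigma>\<^sup>2)/(1 + 2*\<sigma>*x + \<sigma>\<^sup>2) = B / (A + C * x)"
    unfolding e1 e2 using c ab by (intro ratio_cancel) auto
  show "((1+\<sigma>\<^sup>2)*x + 2*\<sigma>)/(1 + 2*\<sigma>*x + \<sigma>\<^sup>2) = (A * x + C) / (A + C * x)"
    unfolding e3 e2 using c ab by (intro ratio_cancel) auto
qed

lemma conf:
  assumes r: "0 < r" "r < R"
  shows "conformally_equivalent R r R (sqrt (R\<^sup>2 - r\<^sup>2))"
proof -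
  define s where "s = sqrt (R\<^sup>2 - r\<^sup>2)"
  have rR: "r\<^sup>2 < R\<^sup>2" using r by (simp add: power_strict_mono)
  have s2: "s\<^sup>2 = R\<^sup>2 - r\<^sup>2" unfolding s_def using rR by simp
  have s0: "0 < s" unfolding s_def using rR by simp
  have sR: "s < R"
  proof -
    have "s\<^sup>2 < R\<^sup>2" using s2 r by simp
    then show ?thesis using r by (intro power_less_imp_less_base[of s 2 R]) auto
  qed
  have RRs: "R\<^sup>2 = s\<^sup>2 + r\<^sup>2" "R\<^sup>2 = r\<^sup>2 + s\<^sup>2" using s2 by simp_all
  define \<rho>1 where "\<rho>1 = (R - s) / r"
  define \<rho>2 where "\<rho>2 = (R - r) / s"
  have Rs: "R - s < r"
  proof -
    have "(R - s) * (R + s) = r * r" using s2 by (simp add: power2_eq_square algebra_simps)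
    moreover have "R - s < R + s" using s0 by simp
    moreover have "0 < R - s" using sR by simp
    ultimately have "(R - s) * (R - s) < r * r" by (metis mult_strict_left_mono)
    then show ?thesis using r by (intro power_less_imp_less_base[of "R - s" 2 r]) (auto simp: power2_eq_square)
  qed
  have Rr: "R - r < s"
  proof -
    have "(R - r) * (R + r) = s * s" using s2 by (simp add: power2_eq_square algebra_simps)
    moreover have "R - r < R + r" using r by simp
    moreover have "0 < R - r" using r by simp
    ultimately have "(R - r) * (R - r) < s * s" by (metis mult_strict_left_mono)
    then show ?thesis using s0 by (intro power_less_imp_less_base[of "R - r" 2 s]) (auto simp: power2_eq_square)
  qed
  have r1: "\<bar>\<rho>1\<bar> < 1" "\<bar>-\<rho>1\<bar> < 1" unfolding \<rho>1_def using Rs sR r by (auto simp: abs_if field_simps)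
  have r2: "\<bar>\<rho>2\<bar> < 1" "\<bar>-\<rho>2\<bar> < 1" unfolding \<rho>2_def using Rr r s0 by (auto simp: abs_if field_simps)
  define g where "g x = (hh \<rho>1 (snd x), hh (-\<rho>2) (- fst x))" for x
  define Dg where "Dg x v = (hdv \<rho>1 (snd x) * snd v, - hdv (-\<rho>2) (- fst x) * fst v)" for x v
  have I1: "hdv \<rho>1 t = s / (R + r * cos t)" for t
    unfolding hdv_def \<rho>1_def
    by (rule sig_facts(1)[OF RRs(1) r(1) sR]) (rule cpos[OF r])
  have I2: "hdv (-\<rho>2) y = (R + s * cos (hh (-\<rho>2) y)) / r" for y
  proof -
    have "s * cos y \<le> s" using s0 cos_le_one[of y] by (simp add: mult_left_le)
    then have p: "0 < R + s * (- cos y)" using sR by simp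
    have h: "hdv (-\<rho>2) y = r / (R + s * (- cos y))"
      using sig_facts(1)[OF RRs(2) s0 r(2) p] unfolding hdv_def \<rho>2_def[symmetric] by simp
    have c: "cos (hh (-\<rho>2) y) = (R * cos y - s) / (R - s * cos y)"
      using sig_facts(2)[OF RRs(2) s0 r(2) p] unfolding cos_hh[OF r2(2)] \<rho>2_def[symmetric]
      by (simp add: minus_divide_left) (metis minus_diff_eq minus_divide_left)
    have h': "hdv (-\<rho>2) y = r / (R - s * cos y)" using h by simp
    have p': "R - s * cos y \<noteq> 0" using p by simp
    have "(R + s * ((R * cos y - s) / (R - s * cos y))) / r = r / (R - s * cos y)"
      using p' r RRs(2) by (simp add: field_simps) algebra
    then show ?thesis unfolding h' c by simp
  qed
  have gd: "(g has_derivative Dg x) (at x)" for x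
  proof -
    have d1: "((\<lambda>x. hh \<rho>1 (snd x)) has_derivative (\<lambda>v. snd v * hdv \<rho>1 (snd x))) (at x)"
      using DERIV_compose_FDERIV[OF hh_deriv[OF r1(1)] has_derivative_snd[OF has_derivative_ident]]
      unfolding hdv_def .
    have d2: "((\<lambda>x. hh (-\<rho>2) (- fst x)) has_derivative (\<lambda>v. (- fst v) * hdv (-\<rho>2) (- fst x))) (at x)"
      using DERIV_compose_FDERIV[OF hh_deriv[OF r2(2)] has_derivative_minus[OF has_derivative_fst[OF has_derivative_ident]]]
      unfolding hdv_def .
    have e1: "g = (\<lambda>x. (hh \<rho>1 (snd x), hh (-\<rho>2) (- fst x)))" using g_def by auto
    have e2: "Dg x = (\<lambda>v. (snd v * hdv \<rho>1 (snd x), (- fst v) * hdv (-\<rho>2) (- fst x)))"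
      using Dg_def by (auto simp: fun_eq_iff)
    show ?thesis unfolding e1 e2 by (rule has_derivative_Pair[OF d1 d2])
  qed
  have sR': "0 < s" "s < R" using s0 sR by auto
  have gcs: "torus_param R s (g x) = torus_param R s (g y)"
    if "cos (fst x) = cos (fst y)" "sin (fst x) = sin (fst y)" "cos (snd x) = cos (snd y)" "sin (snd x) = sin (snd y)" for x y
  proof -
    have a: "cos (hh \<rho>1 (snd x)) = cos (hh \<rho>1 (snd y)) \<and> sin (hh \<rho>1 (snd x)) = sin (hh \<rho>1 (snd y))"
      by (rule hh_cs) (use that in auto)
    have b: "cos (hh (-\<rho>2) (- fst x)) = cos (hh (-\<rho>2) (- fst y)) \<and> sin (hh (-\<rho>2) (- fst x)) = sin (hh (-\<rho>2) (- fst y))"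
      by (rule hh_cs) (use that in auto)
    show ?thesis by (rule tp_eqI) (use a b in \<open>auto simp: g_def\<close>)
  qed
  define F where "F q = torus_param R s (g (SOME x. torus_param R r x = q))" for q
  have FW: "F (torus_param R r x) = torus_param R s (g x)" for x
  proof -
    define y where "y = (SOME y. torus_param R r y = torus_param R r x)"
    have "torus_param R r y = torus_param R r x" unfolding y_def by (rule someI) (rule refl)
    then have "cos (fst y) = cos (fst x) \<and> sin (fst y) = sin (fst x) \<and> cos (snd y) = cos (snd x) \<and> sin (snd y) = sin (snd x)"
      by (rule tp_eqD[OF r])
    then have "torus_param R s (g y) = torus_param R s (g x)" by (intro gcs) auto
    then show ?thesis unfolding F_def y_def .
  qed
  have inj: "inj_on F (torus R r)"
  proof (rule inj_onI)
    fix p q assume "p \<in> torus R r" "q \<in> torus R r" and pq: "F p = F q"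
    then obtain x y where xy: "p = torus_param R r x" "q = torus_param R r y" by (auto simp: torus_def)
    have "torus_param R s (g x) = torus_param R s (g y)" using pq FW xy by simp
    then have e: "cos (fst (g x)) = cos (fst (g y)) \<and> sin (fst (g x)) = sin (fst (g y)) \<and> cos (snd (g x)) = cos (snd (g y)) \<and> sin (snd (g x)) = sin (snd (g y))"
      by (rule tp_eqD[OF sR'])
    have a: "cos (hh (-\<rho>1) (hh \<rho>1 (snd x))) = cos (hh (-\<rho>1) (hh \<rho>1 (snd y))) \<and> sin (hh (-\<rho>1) (hh \<rho>1 (snd x))) = sin (hh (-\<rho>1) (hh \<rho>1 (snd y)))"
      by (rule hh_cs) (use e in \<open>auto simp: g_def\<close>)
    have b: "cos (hh \<rho>2 (hh (-\<rho>2) (- fst x))) = cos (hh \<rho>2 (hh (-\<rho>2) (- fst y))) \<and> sin (hh \<rho>2 (hh (-\<rho>2) (- fst x))) = sin (hh \<rho>2 (hh (-\<rho>2) (- fst y)))"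
      by (rule hh_cs) (use e in \<open>auto simp: g_def\<close>)
    have inv1: "hh (-\<rho>1) (hh \<rho>1 t) = t" for t using hh_inv[OF r1(1)] .
    have inv2: "hh \<rho>2 (hh (-\<rho>2) t) = t" for t using hh_inv[OF r2(2)] by simp
    show "p = q" unfolding xy by (rule tp_eqI) (use a b in \<open>simp_all add: inv1 inv2\<close>)
  qed
  have img: "F ` torus R r = torus R s"
  proof
    show "F ` torus R r \<subseteq> torus R s" using FW by (auto simp: torus_def)
    show "torus R s \<subseteq> F ` torus R r"
    proof
      fix q assume "q \<in> torus R s"
      then obtain y where y: "q = torus_param R s y" by (auto simp: torus_def)
      define x where "x = (- hh \<rho>2 (snd y), hh (-\<rho>1) (fst y))"
      have inv1: "hh \<rho>1 (hh (-\<rho>1) t) = t" for t using hh_inv[OF r1(2)] by simp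
      have inv2: "hh (-\<rho>2) (hh \<rho>2 t) = t" for t using hh_inv[OF r2(1)] .
      have "g x = y" unfolding g_def x_def by (simp add: inv1 inv2)
      then have "q = F (torus_param R r x)" using FW y by simp
      then show "q \<in> F ` torus R r" by (auto simp: torus_def)
    qed
  qed
  have gcont: "continuous_on UNIV g"
    using gd by (meson continuous_at_imp_continuous_on has_derivative_continuous)
  have cont: "continuous_on (torus R r) F"
  proof (rule cont_via_quot[of "cbox (0,0) (2*pi,2*pi)" "torus_param R r"])
    show "compact (cbox (0::real,0::real) (2*pi,2*pi))" by (rule compact_cbox)
    show "continuous_on (cbox (0,0) (2*pi,2*pi)) (torus_param R r)" by (rule tp_cont)
    show "torus_param R r ` cbox (0,0) (2*pi,2*pi) = torus R r" by (rule torus_box[symmetric])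
    have "F \<circ> torus_param R r = torus_param R s \<circ> g" using FW by (auto simp: fun_eq_iff)
    moreover have "continuous_on (cbox (0,0) (2*pi,2*pi)) (torus_param R s \<circ> g)"
      by (rule continuous_on_compose[OF continuous_on_subset[OF gcont] tp_cont]) auto
    ultimately show "continuous_on (cbox (0,0) (2*pi,2*pi)) (F \<circ> torus_param R r)" by simp
  qed
  have comp: "compact (torus R r)"
    unfolding torus_box by (rule compact_continuous_image[OF tp_cont compact_cbox])
  obtain F' where hom: "homeomorphism (torus R r) (torus R s) F F'"
    using homeomorphism_compact[OF comp cont img inj] by blast
  have jac: "fst (Dg x (1,0)) * snd (Dg x (0,1)) - snd (Dg x (1,0)) * fst (Dg x (0,1)) > 0" for x
    unfolding Dg_def using hd_pos[OF r1(1)] hd_pos[OF r2(2)] by simp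
  have met: "\<exists>c>0. \<forall>v w. torus_metric R s (g x) (Dg x v) (Dg x w) = c * torus_metric R r x v w" for x
  proof -
    define P where "P = R + r * cos (snd x)"
    define h2 where "h2 = hdv (-\<rho>2) (- fst x)"
    have P: "0 < P" unfolding P_def by (rule cpos[OF r])
    have h2: "0 < h2" unfolding h2_def by (rule hd_pos[OF r2(2)])
    have e1: "hdv \<rho>1 (snd x) = s / P" unfolding P_def by (rule I1)
    have e2: "R + s * cos (snd (g x)) = r * h2" unfolding h2_def I2 g_def using r by simp
    show ?thesis
    proof (intro exI conjI allI)
      show "0 < s\<^sup>2 * h2\<^sup>2 / P\<^sup>2" using s0 h2 P by simp
      fix v w
      show "torus_metric R s (g x) (Dg x v) (Dg x w) = s\<^sup>2 * h2\<^sup>2 / P\<^sup>2 * torus_metric R r x v w"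
        unfolding tmetric e2 unfolding Dg_def fst_conv snd_conv e1 h2_def[symmetric] P_def[symmetric]
        using P by (simp add: field_simps power2_eq_square)
    qed
  qed
  show ?thesis unfolding conformally_equivalent_def s_def[symmetric]
    by (intro exI[of _ F] exI[of _ F'] exI[of _ g] exI[of _ Dg] conjI hom allI gd jac met)
       (simp add: FW)
qed

lemma ratio_sq: "0 < (r::real) \<Longrightarrow> 0 \<le> R \<Longrightarrow> R / r = sqrt ((R/r)\<^sup>2)"
  by simp

lemma lt_sqrt2: "0 < (r::real) \<Longrightarrow> 0 \<le> R \<Longrightarrow> (R/r < sqrt 2) \<longleftrightarrow> R\<^sup>2 < 2*r\<^sup>2"
proof -
  assume a: "0 < r" "0 \<le> R"
  have "(R/r < sqrt 2) \<longleftrightarrow> (R/r)\<^sup>2 < 2" by (subst ratio_sq[OF a]) (simp only: real_sqrt_less_iff)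
  also have "\<dots> \<longleftrightarrow> R\<^sup>2 < 2*r\<^sup>2" using a by (simp add: power_divide divide_less_eq)
  finally show ?thesis .
qed

lemma gt_sqrt2: "0 < (r::real) \<Longrightarrow> 0 \<le> R \<Longrightarrow> (sqrt 2 < R/r) \<longleftrightarrow> 2*r\<^sup>2 < R\<^sup>2"
proof -
  assume a: "0 < r" "0 \<le> R"
  have "(sqrt 2 < R/r) \<longleftrightarrow> 2 < (R/r)\<^sup>2" by (subst ratio_sq[OF a]) (simp only: real_sqrt_less_iff)
  also have "\<dots> \<longleftrightarrow> 2*r\<^sup>2 < R\<^sup>2" using a by (simp add: power_divide less_divide_eq)
  finally show ?thesis .
qed

lemma bij_part:
  "bij_betw (\<lambda>(R, r). (R, sqrt (R\<^sup>2 - r\<^sup>2)))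
     {(R, r). standard_torus_index R r \<and> 1 < R / r \<and> R / r < sqrt 2}
     {(R, r). standard_torus_index R r \<and> sqrt 2 < R / r}"
proof (rule bij_betw_byWitness[where f'="\<lambda>(R, r). (R, sqrt (R\<^sup>2 - r\<^sup>2))"])
  have inv: "sqrt (R\<^sup>2 - (sqrt (R\<^sup>2 - r\<^sup>2))\<^sup>2) = r" if "0 < r" "r < (R::real)" for R r
  proof -
    have "r\<^sup>2 < R\<^sup>2" using that by (simp add: power_strict_mono)
    then show ?thesis using that by simp
  qed
  show "\<forall>a\<in>{(R, r). standard_torus_index R r \<and> 1 < R / r \<and> R / r < sqrt 2}.
      (\<lambda>(R, r). (R, sqrt (R\<^sup>2 - r\<^sup>2))) ((\<lambda>(R, r). (R, sqrt (R\<^sup>2 - r\<^sup>2))) a) = a"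
    using inv by (auto simp: standard_torus_index_def)
  show "\<forall>a\<in>{(R, r). standard_torus_index R r \<and> sqrt 2 < R / r}.
      (\<lambda>(R, r). (R, sqrt (R\<^sup>2 - r\<^sup>2))) ((\<lambda>(R, r). (R, sqrt (R\<^sup>2 - r\<^sup>2))) a) = a"
    using inv by (auto simp: standard_torus_index_def)
  show "(\<lambda>(R, r). (R, sqrt (R\<^sup>2 - r\<^sup>2))) ` {(R, r). standard_torus_index R r \<and> 1 < R / r \<and> R / r < sqrt 2}
      \<subseteq> {(R, r). standard_torus_index R r \<and> sqrt 2 < R / r}"
  proof clarsimp
    fix R r :: real
    assume h: "standard_torus_index R r" "1 < R / r" "R / r < sqrt 2"
    have r: "0 < r" "r < R" using h(1) by (auto simp: standard_torus_index_def)
    have rR: "r\<^sup>2 < R\<^sup>2" using r by (simp add: power_strict_mono)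
    have q: "R\<^sup>2 < 2*r\<^sup>2" using h(3) lt_sqrt2[of r R] r by simp
    define s where "s = sqrt (R\<^sup>2 - r\<^sup>2)"
    have s2: "s\<^sup>2 = R\<^sup>2 - r\<^sup>2" unfolding s_def using rR by simp
    have s0: "0 < s" unfolding s_def using rR by simp
    have sR: "s < R"
    proof -
      have "s\<^sup>2 < R\<^sup>2" using s2 r by simp
      then show ?thesis using r by (intro power_less_imp_less_base[of s 2 R]) auto
    qed
    have "sqrt 2 < R / s" using gt_sqrt2[of s R] s0 r s2 q by simp
    then show "standard_torus_index R (sqrt (R\<^sup>2 - r\<^sup>2)) \<and> sqrt 2 < R / sqrt (R\<^sup>2 - r\<^sup>2)"
      using s0 sR unfolding s_def standard_torus_index_def by simp
  qed
  show "(\<lambda>(R, r). (R, sqrt (R\<^sup>2 - r\<^sup>2))) ` {(R, r). standard_torus_index R r \<and> sqrt 2 < R / r}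
      \<subseteq> {(R, r). standard_torus_index R r \<and> 1 < R / r \<and> R / r < sqrt 2}"
  proof clarsimp
    fix R r :: real
    assume h: "standard_torus_index R r" "sqrt 2 < R / r"
    have r: "0 < r" "r < R" using h(1) by (auto simp: standard_torus_index_def)
    have rR: "r\<^sup>2 < R\<^sup>2" using r by (simp add: power_strict_mono)
    have q: "2*r\<^sup>2 < R\<^sup>2" using h(2) gt_sqrt2[of r R] r by simp
    define s where "s = sqrt (R\<^sup>2 - r\<^sup>2)"
    have s2: "s\<^sup>2 = R\<^sup>2 - r\<^sup>2" unfolding s_def using rR by simp
    have s0: "0 < s" unfolding s_def using rR by simp
    have sR: "s < R"
    proof -
      have "s\<^sup>2 < R\<^sup>2" using s2 r by simp
      then show ?thesis using r by (intro power_less_imp_less_base[of s 2 R]) auto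
    qed
    have "R / s < sqrt 2" using lt_sqrt2[of s R] s0 r s2 q by simp
    moreover have "1 < R / s" using s0 sR by simp
    ultimately show "standard_torus_index R (sqrt (R\<^sup>2 - r\<^sup>2)) \<and> 1 < R / sqrt (R\<^sup>2 - r\<^sup>2) \<and> R / sqrt (R\<^sup>2 - r\<^sup>2) < sqrt 2"
      using s0 sR unfolding s_def standard_torus_index_def by simp
  qed
qed

theorem proposition2:
  shows "(\<forall>R r. standard_torus_index R r \<and> 1 < R / r \<and> R / r < sqrt 2 \<longrightarrow>
             conformally_equivalent R r R (sqrt (R\<^sup>2 - r\<^sup>2))) \<and>
         bij_betw (\<lambda>(R, r). (R, sqrt (R\<^sup>2 - r\<^sup>2)))
           {(R, r). standard_torus_index R r \<and> 1 < R / r \<and> R / r < sqrt 2}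
           {(R, r). standard_torus_index R r \<and> sqrt 2 < R / r}"
  using conf bij_part by (auto simp: standard_torus_index_def)

end
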